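(* In the setting described in the context, for every $S\in\Omega_{worm}$, $$\pi_{worm}(S)\ \ge\ \frac12\left(\frac{x_{\min}}{2}\right)^{|E_C|},$$ where $x_{\min}=\min_{e\in E_C}x_e$.
   Context: Let $\beta>1$. Let $G=(V,E)$ be a finite connected simple 4-regular graph with, at each vertex, its four incident edges labelled bijectively $x_1,\dots,x_4$. Each edge has two half-edges (one at each endpoint). Pairing at each vertex slot $x_1$ with $x_4$ and $x_2$ with $x_3$, and following edges by entering a vertex through one slot of a pair and leaving through the other, partitions $E$ into closed trails (circuits) $C_1,\dots,C_m$. For each circuit a reference half-edge $h_i$ is fixed. Consider orientations (equivalently, maps $\sigma$ from half-edges to $\{0,1\}$ with opposite values on the two half-edges of each edge) of nonzero weight for the vertex function $f^*$ with $f^*(0011)=f^*(1100)=\beta$, $f^*(0101)=f^*(1010)=1$, $f^*=0$ otherwise (evaluated at $v$ on the half-edges at $v$ in slot order $x_1,\dots,x_4$); in these, values alternate along each circuit and $\sigma(C_i):=\sigma(h_i)$. A vertex at which the pair $\{x_1,x_4\}$ lies on $C_i$ and $\{x_2,x_3\}$ on $C_j$, $i\neq j$, is an agree-vertex if its weight is $\beta$ exactly when $\sigma(C_i)=\sigma(C_j)$ (and $1$ otherwise), and a disagree-vertex if its weight is $\beta$ exactly when $\sigma(C_i)\neq\sigma(C_j)$; $A(i,j),D(i,j)$ count these. $G_C=(\mathcal{C},E_C)$, $\mathcal{C}=\{C_1,\dots,C_m\}$, has an edge $\{C_i,C_j\}$ iff $i\ne j$ and they share such a vertex. Assume the system $X_u\oplus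 X_v=\mathbf{I}(A(u,v)<D(u,v))$ for all $\{u,v\}\in E_C$ has a solution over $\mathrm{GF}(2)$, and for each circuit with $X_i=1$ replace $h_i$ by an adjacent half-edge of $C_i$ (which complements $\sigma(C_i)$ and swaps agree/disagree vertices between $C_i$ and each other circuit); with $A,D$ recomputed after this change, set $\beta_e=\beta^{A(u,v)-D(u,v)}$ and $x_e=(\beta_e-1)/(\beta_e+1)$ for $e=\{u,v\}\in E_C$. Worm measure. For $k\ge0$ let $\Omega_k$ be the set of edge sets $S\subseteq E_C$ such that exactly $k$ vertices of $G_C$ have odd degree in $(\mathcal{C},S)$; $\Omega_{worm}=\Omega_0\cup\Omega_2$. Let $w(S)=\prod_{e\in S}x_e$, $Z_k=\sum_{S\in\Omega_k}w(S)$, $\xi(S)=m$ if $S\in\Omega_0$, $\xi(S)=2$ if $S\in\Omega_2$, $\xi(S)=0$ otherwise, $w_{worm}(S)=\xi(S)w(S)$, $Z_{worm}=mZ_0+2Z_2$ and $\pi_{worm}(S)=w_{worm}(S)/Z_{worm}$. *)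

theory Defs
  imports Complex_Main
begin

text \<open>Vertices have type 'v; slots x1,x2,x3,x4 are encoded as 0,1,2,3.
  nbr v i is the neighbour of v reached through the edge in slot i.\<close>

definition adj_rel :: "'v set \<Rightarrow> ('v \<Rightarrow> nat \<Rightarrow> 'v) \<Rightarrow> ('v \<times> 'v) set" where
  "adj_rel V nbr = {(u, w). u \<in> V \<and> (\<exists>i<4. nbr u i = w)}"

definition labelled_4reg_graph :: "'v set \<Rightarrow> ('v \<Rightarrow> nat \<Rightarrow> 'v) \<Rightarrow> bool" where
  "labelled_4reg_graph V nbr \<longleftrightarrow>
     finite V \<and> V \<noteq> {} \<and>
     (\<forall>v\<in>V. \<forall>i<4. nbr v i \<in> V \<and> nbr v i \<noteq> v) \<and>
     (\<forall>v\<in>V. inj_on (nbr v) {..<4}) \<and>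
     (\<forall>v\<in>V. \<forall>i<4. \<exists>j<4. nbr (nbr v i) j = v) \<and>
     (\<forall>u\<in>V. \<forall>w\<in>V. (u, w) \<in> (adj_rel V nbr)\<^sup>*)"

definition half_edges :: "'v set \<Rightarrow> ('v \<times> nat) set" where
  "half_edges V = V \<times> {..<4}"

definition back_slot :: "('v \<Rightarrow> nat \<Rightarrow> 'v) \<Rightarrow> 'v \<Rightarrow> nat \<Rightarrow> nat" where
  "back_slot nbr v i = (THE j. j < 4 \<and> nbr (nbr v i) j = v)"

definition opp :: "('v \<Rightarrow> nat \<Rightarrow> 'v) \<Rightarrow> 'v \<times> nat \<Rightarrow> 'v \<times> nat" where
  "opp nbr h = (nbr (fst h) (snd h), back_slot nbr (fst h) (snd h))"

text \<open>Pairing x1 with x4 and x2 with x3 (slots 0<->3, 1<->2).\<close>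
definition partner :: "'v \<times> nat \<Rightarrow> 'v \<times> nat" where
  "partner h = (fst h, 3 - snd h)"

definition circ_rel :: "'v set \<Rightarrow> ('v \<Rightarrow> nat \<Rightarrow> 'v) \<Rightarrow> (('v \<times> nat) \<times> ('v \<times> nat)) set" where
  "circ_rel V nbr = {(h, opp nbr h) | h. h \<in> half_edges V} \<union> {(h, partner h) | h. h \<in> half_edges V}"

text \<open>Circuits, each represented as the set of its half-edges.\<close>
definition circuits :: "'v set \<Rightarrow> ('v \<Rightarrow> nat \<Rightarrow> 'v) \<Rightarrow> ('v \<times> nat) set set" where
  "circuits V nbr = half_edges V // ((circ_rel V nbr \<union> (circ_rel V nbr)\<inverse>)\<^sup>*)"

text \<open>Vertex function f*, with True encoding 1 and False encoding 0.\<close>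
definition fstar :: "real \<Rightarrow> bool \<Rightarrow> bool \<Rightarrow> bool \<Rightarrow> bool \<Rightarrow> real" where
  "fstar \<beta> a b c d =
    (if (a, b, c, d) = (False, False, True, True) \<or> (a, b, c, d) = (True, True, False, False) then \<beta>
     else if (a, b, c, d) = (False, True, False, True) \<or> (a, b, c, d) = (True, False, True, False) then 1
     else 0)"

definition vweight :: "real \<Rightarrow> ('v \<times> nat \<Rightarrow> bool) \<Rightarrow> 'v \<Rightarrow> real" where
  "vweight \<beta> \<sigma> v = fstar \<beta> (\<sigma> (v, 0)) (\<sigma> (v, 1)) (\<sigma> (v, 2)) (\<sigma> (v, 3))"

text \<open>Orientations (opposite values on the two half-edges of each edge) of nonzero weight.\<close>
definition valid_orient :: "'v set \<Rightarrow> ('v \<Rightarrow> nat \<Rightarrow> 'v) \<Rightarrow> real \<Rightarrow> ('v \<times> nat \<Rightarrow> bool) \<Rightarrow> bool" where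
  "valid_orient V nbr \<beta> \<sigma> \<longleftrightarrow>
     (\<forall>h\<in>half_edges V. \<sigma> (opp nbr h) \<noteq> \<sigma> h) \<and> (\<forall>v\<in>V. vweight \<beta> \<sigma> v \<noteq> 0)"

definition crossing :: "'v \<Rightarrow> ('v \<times> nat) set \<Rightarrow> ('v \<times> nat) set \<Rightarrow> bool" where
  "crossing v C C' \<longleftrightarrow> (v, 0) \<in> C \<and> (v, 3) \<in> C \<and> (v, 1) \<in> C' \<and> (v, 2) \<in> C'"

text \<open>Number of agree / disagree vertices between the two circuits of the edge e of G_C,
  w.r.t. the reference half-edge choice h (sigma(C) = sigma(h C)).\<close>
definition agree_cnt ::
  "'v set \<Rightarrow> ('v \<Rightarrow> nat \<Rightarrow> 'v) \<Rightarrow> real \<Rightarrow> (('v \<times> nat) set \<Rightarrow> 'v \<times> nat) \<Rightarrow> ('v \<times> nat) set set \<Rightarrow> nat" where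
  "agree_cnt V nbr \<beta> h e = card {v \<in> V. \<exists>C\<in>e. \<exists>C'\<in>e. C \<noteq> C' \<and> crossing v C C' \<and>
      (\<forall>\<sigma>. valid_orient V nbr \<beta> \<sigma> \<longrightarrow> (vweight \<beta> \<sigma> v = \<beta> \<longleftrightarrow> \<sigma> (h C) = \<sigma> (h C')))}"

definition disagree_cnt ::
  "'v set \<Rightarrow> ('v \<Rightarrow> nat \<Rightarrow> 'v) \<Rightarrow> real \<Rightarrow> (('v \<times> nat) set \<Rightarrow> 'v \<times> nat) \<Rightarrow> ('v \<times> nat) set set \<Rightarrow> nat" where
  "disagree_cnt V nbr \<beta> h e = card {v \<in> V. \<exists>C\<in>e. \<exists>C'\<in>e. C \<noteq> C' \<and> crossing v C C' \<and>
      (\<forall>\<sigma>. valid_orient V nbr \<beta> \<sigma> \<longrightarrow> (vweight \<beta> \<sigma> v = \<beta> \<longleftrightarrow> \<sigma> (h C) \<noteq> \<sigma> (h C')))}"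

definition circuit_edges :: "'v set \<Rightarrow> ('v \<Rightarrow> nat \<Rightarrow> 'v) \<Rightarrow> ('v \<times> nat) set set set" where
  "circuit_edges V nbr = {{C, C'} | C C'. C \<in> circuits V nbr \<and> C' \<in> circuits V nbr \<and> C \<noteq> C' \<and>
      (\<exists>v\<in>V. crossing v C C')}"

definition edge_x ::
  "'v set \<Rightarrow> ('v \<Rightarrow> nat \<Rightarrow> 'v) \<Rightarrow> real \<Rightarrow> (('v \<times> nat) set \<Rightarrow> 'v \<times> nat) \<Rightarrow> ('v \<times> nat) set set \<Rightarrow> real" where
  "edge_x V nbr \<beta> h e =
     (let b = \<beta> powr (real (agree_cnt V nbr \<beta> h e) - real (disagree_cnt V nbr \<beta> h e)) in (b - 1) / (b + 1))"

text \<open>Worm measure on a graph with vertex set N and edge set E (edges are 2-sets), weights x.\<close>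
definition odd_deg_count :: "'c set \<Rightarrow> 'c set set \<Rightarrow> nat" where
  "odd_deg_count N S = card {c \<in> N. odd (card {e \<in> S. c \<in> e})}"

definition Omega :: "'c set \<Rightarrow> 'c set set \<Rightarrow> nat \<Rightarrow> 'c set set set" where
  "Omega N E k = {S. S \<subseteq> E \<and> odd_deg_count N S = k}"

definition Omega_worm :: "'c set \<Rightarrow> 'c set set \<Rightarrow> 'c set set set" where
  "Omega_worm N E = Omega N E 0 \<union> Omega N E 2"

definition wS :: "('c set \<Rightarrow> real) \<Rightarrow> 'c set set \<Rightarrow> real" where
  "wS x S = (\<Prod>e\<in>S. x e)"

definition Zk :: "'c set \<Rightarrow> 'c set set \<Rightarrow> ('c set \<Rightarrow> real) \<Rightarrow> nat \<Rightarrow> real" where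
  "Zk N E x k = (\<Sum>S\<in>Omega N E k. wS x S)"

definition xi :: "'c set \<Rightarrow> 'c set set \<Rightarrow> 'c set set \<Rightarrow> real" where
  "xi N E S = (if S \<in> Omega N E 0 then real (card N) else if S \<in> Omega N E 2 then 2 else 0)"

definition Z_worm :: "'c set \<Rightarrow> 'c set set \<Rightarrow> ('c set \<Rightarrow> real) \<Rightarrow> real" where
  "Z_worm N E x = real (card N) * Zk N E x 0 + 2 * Zk N E x 2"

definition pi_worm :: "'c set \<Rightarrow> 'c set set \<Rightarrow> ('c set \<Rightarrow> real) \<Rightarrow> 'c set set \<Rightarrow> real" where
  "pi_worm N E x S = xi N E S * wS x S / Z_worm N E x"

end

theory Submission
  imports Defs
begin

definition oddset :: "'c set \<Rightarrow> 'c set set \<Rightarrow> 'c set" where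
  "oddset N T = {c \<in> N. odd (card {e \<in> T. c \<in> e})}"

lemma odd_symdiff:
  assumes "finite A" "finite B"
  shows "odd (card {e \<in> (A-B)\<union>(B-A). c\<in>e}) \<longleftrightarrow> (odd (card {e\<in>A. c\<in>e}) \<noteq> odd (card {e\<in>B. c\<in>e}))"
proof -
  define X where "X = {e\<in>A. c\<in>e}"
  define Y where "Y = {e\<in>B. c\<in>e}"
  have fX: "finite X" "finite Y" using assms by (auto simp: X_def Y_def)
  have eq: "{e \<in> (A-B)\<union>(B-A). c\<in>e} = (X-Y)\<union>(Y-X)" by (auto simp: X_def Y_def)
  have c1: "card ((X-Y)\<union>(Y-X)) = card (X-Y) + card (Y-X)"
    by (rule card_Un_disjoint) (use fX in auto)
  have c2: "card X = card (X-Y) + card (X\<inter>Y)"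
  proof -
    have "card ((X-Y) \<union> (X\<inter>Y)) = card(X-Y)+card(X\<inter>Y)" by (rule card_Un_disjoint) (use fX in auto)
    then show ?thesis by (simp add: Un_Diff_Int)
  qed
  have c3: "card Y = card (Y-X) + card (X\<inter>Y)"
  proof -
    have "card ((Y-X) \<union> (Y\<inter>X)) = card(Y-X)+card(Y\<inter>X)" by (rule card_Un_disjoint) (use fX in auto)
    then show ?thesis by (metis Un_Diff_Int Int_commute)
  qed
  show ?thesis unfolding eq X_def[symmetric] Y_def[symmetric] c1 using c2 c3 by presburger
qed

lemma oddset_symdiff:
  assumes "finite A" "finite B"
  shows "oddset N ((A-B)\<union>(B-A)) = (oddset N A - oddset N B) \<union> (oddset N B - oddset N A)"
  using odd_symdiff[OF assms] unfolding oddset_def by blast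

lemma oddset_single:
  assumes "a \<noteq> b" "a \<in> N" "b \<in> N"
  shows "oddset N {{a,b}} = {a,b}"
proof -
  have "\<And>c. card {e \<in> {{a,b}}. c \<in> e} = (if c \<in> {a,b} then 1 else 0)"
  proof -
    fix c
    show "card {e \<in> {{a,b}}. c \<in> e} = (if c \<in> {a,b} then 1 else 0)"
    proof (cases "c \<in> {a,b}")
      case True then have "{e \<in> {{a,b}}. c \<in> e} = {{a,b}}" by auto
      then show ?thesis using True by simp
    next
      case False then have "{e \<in> {{a,b}}. c \<in> e} = {}" by auto
      then show ?thesis using False by simp
    qed
  qed
  then show ?thesis using assms unfolding oddset_def by auto
qed

lemma odd_deg_count_oddset: "odd_deg_count N T = card (oddset N T)"
  unfolding odd_deg_count_def oddset_def by simp

definition twoset :: "'c set \<Rightarrow> 'c set set \<Rightarrow> bool" where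
  "twoset N E \<longleftrightarrow> (\<forall>e\<in>E. \<exists>a b. e = {a,b} \<and> a \<in> N \<and> b \<in> N \<and> a \<noteq> b)"

lemma paths_exist:
  assumes tw: "twoset N E" and fE: "finite E" and rN: "r \<in> N"
    and reach: "(r, c) \<in> {(a,b). {a,b} \<in> E}\<^sup>*"
  shows "c = r \<or> (c \<noteq> r \<and> (\<exists>P\<subseteq>E. oddset N P = {r,c}))"
  using reach
proof (induction rule: rtrancl_induct)
  case base
  then show ?case by simp
next
  case (step b c)
  have bcE: "{b,c} \<in> E" using step.hyps(2) by simp
  then obtain a1 a2 where a: "{b,c} = {a1,a2}" "a1 \<in> N" "a2 \<in> N" "a1 \<noteq> a2" using tw unfolding twoset_def by blast
  then have bc: "b \<noteq> c" "b \<in> N" "c \<in> N" by (auto simp: doubleton_eq_iff)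
  show ?case
  proof (cases "c = r")
    case True then show ?thesis by simp
  next
    case cr: False
    from step.IH show ?thesis
    proof
      assume "b = r"
      then have "oddset N {{b,c}} = {r,c}" using oddset_single[OF bc] by simp
      then show ?thesis using cr bcE by blast
    next
      assume "b \<noteq> r \<and> (\<exists>P\<subseteq>E. oddset N P = {r, b})"
      then obtain P where P: "P \<subseteq> E" "oddset N P = {r,b}" "b \<noteq> r" by blast
      have fP: "finite P" using P(1) fE finite_subset by blast
      have "oddset N ((P - {{b,c}}) \<union> ({{b,c}} - P)) = {r,c}"
        using oddset_symdiff[OF fP, of "{{b,c}}" N] oddset_single[OF bc] P(2,3) bc cr by auto
      moreover have "(P - {{b,c}}) \<union> ({{b,c}} - P) \<subseteq> E" using P(1) bcE by auto
      ultimately show ?thesis using cr by blast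
    qed
  qed
qed

lemma finite_Omega: "finite E \<Longrightarrow> finite (Omega N E k)"
  unfolding Omega_def by (rule finite_subset[of _ "Pow E"]) auto

lemma count_bound:
  assumes tw: "twoset N E" and fE: "finite E" and fN: "finite N" and rN: "r \<in> N"
    and conn: "\<forall>c\<in>N. (r, c) \<in> {(a,b). {a,b} \<in> E}\<^sup>*"
  shows "(card N - 1) * card (Omega N E 0) \<le> card (Omega N E 2)"
proof -
  have "\<forall>u\<in>N-{r}. \<exists>P. P\<subseteq>E \<and> oddset N P = {r,u}"
    using paths_exist[OF tw fE rN] conn by blast
  then obtain Pf where Pf: "\<And>u. u \<in> N-{r} \<Longrightarrow> Pf u \<subseteq> E \<and> oddset N (Pf u) = {r,u}"
    by metis
  define f where "f = (\<lambda>(T, u). (T - Pf u) \<union> (Pf u - T))"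
  have O0: "\<And>T. T \<in> Omega N E 0 \<Longrightarrow> oddset N T = {} \<and> T \<subseteq> E"
  proof -
    fix T assume "T \<in> Omega N E 0"
    then have "card (oddset N T) = 0" "T \<subseteq> E" unfolding Omega_def odd_deg_count_oddset by auto
    moreover have "finite (oddset N T)" using fN unfolding oddset_def by auto
    ultimately show "oddset N T = {} \<and> T \<subseteq> E" by simp
  qed
  have fodd: "\<And>T u. T \<in> Omega N E 0 \<Longrightarrow> u \<in> N-{r} \<Longrightarrow> oddset N (f (T,u)) = {r,u} \<and> f (T,u) \<subseteq> E"
  proof -
    fix T u assume T: "T \<in> Omega N E 0" and u: "u \<in> N-{r}"
    have fT: "finite T" using O0[OF T] fE finite_subset by blast
    have fP: "finite (Pf u)" using Pf[OF u] fE finite_subset by blast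
    have o1: "oddset N T = {}" "T \<subseteq> E" using O0[OF T] by auto
    have o2: "oddset N (Pf u) = {r,u}" "Pf u \<subseteq> E" using Pf[OF u] by auto
    have "f (T,u) = (T - Pf u) \<union> (Pf u - T)" by (simp add: f_def)
    then have "oddset N (f (T,u)) = (oddset N T - oddset N (Pf u)) \<union> (oddset N (Pf u) - oddset N T)"
      using oddset_symdiff[OF fT fP, of N] by simp
    then have "oddset N (f (T,u)) = {r,u}" unfolding o1 o2 by simp
    moreover have "f (T,u) \<subseteq> E" using o1 o2 unfolding f_def by auto
    ultimately show "oddset N (f (T,u)) = {r,u} \<and> f (T,u) \<subseteq> E" by simp
  qed
  have img: "f ` (Omega N E 0 \<times> (N-{r})) \<subseteq> Omega N E 2"
  proof
    fix y assume "y \<in> f ` (Omega N E 0 \<times> (N-{r}))"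
    then obtain T u where Tu: "T \<in> Omega N E 0" "u \<in> N-{r}" "y = f (T,u)" by auto
    then have "card {r,u} = 2" by auto
    then show "y \<in> Omega N E 2" using fodd[OF Tu(1,2)] Tu(3) unfolding Omega_def odd_deg_count_oddset by auto
  qed
  have inj: "inj_on f (Omega N E 0 \<times> (N-{r}))"
  proof (rule inj_onI)
    fix a b assume a: "a \<in> Omega N E 0 \<times> (N-{r})" and b: "b \<in> Omega N E 0 \<times> (N-{r})" and eq: "f a = f b"
    obtain T u where ab1: "a = (T,u)" by fastforce
    obtain T' u' where ab2: "b = (T',u')" by fastforce
    have m: "T \<in> Omega N E 0" "u \<in> N-{r}" "T' \<in> Omega N E 0" "u' \<in> N-{r}" using a b ab1 ab2 by auto
    have "{r,u} = {r,u'}" using fodd[OF m(1,2)] fodd[OF m(3,4)] eq unfolding ab1 ab2 by metis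
    then have uu: "u = u'" using m by (auto simp: doubleton_eq_iff)
    have "(T - Pf u) \<union> (Pf u - T) = (T' - Pf u) \<union> (Pf u - T')" using eq unfolding ab1 ab2 f_def uu by simp
    then have "T = T'" by blast
    then show "a = b" using uu ab1 ab2 by simp
  qed
  have "card (Omega N E 0 \<times> (N-{r})) \<le> card (Omega N E 2)"
    by (rule card_inj_on_le[OF inj img finite_Omega[OF fE]])
  moreover have "card (Omega N E 0 \<times> (N-{r})) = card (Omega N E 0) * (card N - 1)"
    using card_cartesian_product[of "Omega N E 0" "N-{r}"] rN fN by (simp add: card_Diff_singleton)
  ultimately show ?thesis by (simp add: mult.commute)
qed

lemma worm_bound:
  fixes x :: "'c set \<Rightarrow> real"
  assumes fN: "finite N" and tw: "twoset N E" and rN: "r \<in> N"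
    and conn: "\<forall>c\<in>N. (r, c) \<in> {(a,b). {a,b} \<in> E}\<^sup>*"
    and x01: "\<forall>e\<in>E. 0 \<le> x e \<and> x e \<le> 1"
    and S: "S \<in> Omega_worm N E"
  shows "pi_worm N E x S \<ge> 1/2 * (Min (x ` E) / 2) ^ card E"
proof -
  have "E \<subseteq> Pow N"
  proof
    fix e assume "e \<in> E"
    then obtain a b where "e = {a,b}" "a \<in> N" "b \<in> N" using tw unfolding twoset_def by metis
    then show "e \<in> Pow N" by simp
  qed
  then have fE: "finite E" using fN by (meson finite_Pow_iff finite_subset)
  define m where "m = card N"
  have m1: "m \<ge> 1" using rN fN m_def by (metis One_nat_def Suc_leI card_gt_0_iff empty_iff)
  define c0 where "c0 = card (Omega N E 0)"
  define c2 where "c2 = card (Omega N E 2)"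
  define n where "n = card E"
  have w01: "\<And>T. T \<subseteq> E \<Longrightarrow> 0 \<le> wS x T \<and> wS x T \<le> 1"
    unfolding wS_def using x01 by (auto intro!: prod_nonneg prod_le_1)
  have Z0le: "Zk N E x 0 \<le> real c0"
  proof -
    have "Zk N E x 0 \<le> (\<Sum>T\<in>Omega N E 0. 1)" unfolding Zk_def
      by (rule sum_mono) (use w01 in \<open>auto simp: Omega_def\<close>)
    then show ?thesis by (simp add: c0_def)
  qed
  have Z2le: "Zk N E x 2 \<le> real c2"
  proof -
    have "Zk N E x 2 \<le> (\<Sum>T\<in>Omega N E 2. 1)" unfolding Zk_def
      by (rule sum_mono) (use w01 in \<open>auto simp: Omega_def\<close>)
    then show ?thesis by (simp add: c2_def)
  qed
  have Z2ge: "Zk N E x 2 \<ge> 0" unfolding Zk_def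
    by (rule sum_nonneg) (use w01 in \<open>auto simp: Omega_def\<close>)
  have emp: "{} \<in> Omega N E 0" unfolding Omega_def odd_deg_count_def by simp
  have Z0ge: "Zk N E x 0 \<ge> 1"
  proof -
    have "wS x {} \<le> Zk N E x 0" unfolding Zk_def
      by (rule member_le_sum[OF emp]) (use w01 finite_Omega[OF fE] in \<open>auto simp: Omega_def\<close>)
    then show ?thesis by (simp add: wS_def)
  qed
  have disj: "Omega N E 0 \<inter> Omega N E 2 = {}" unfolding Omega_def by auto
  have "c0 + c2 = card (Omega N E 0 \<union> Omega N E 2)"
    unfolding c0_def c2_def by (rule card_Un_disjoint[symmetric]) (use finite_Omega[OF fE] disj in auto)
  also have "\<dots> \<le> card (Pow E)"
    by (rule card_mono) (use fE in \<open>auto simp: Omega_def\<close>)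
  finally have c02: "c0 + c2 \<le> 2 ^ n" using fE by (simp add: card_Pow n_def)
  have cb: "(m - 1) * c0 \<le> c2" unfolding m_def c0_def c2_def by (rule count_bound[OF tw fE fN rN conn])
  have c02r: "real c0 + real c2 \<le> 2 ^ n" using c02 by (metis of_nat_add of_nat_le_iff of_nat_numeral of_nat_power)
  have cbr: "real m * real c0 \<le> real c0 + real c2"
  proof -
    have "m * c0 \<le> c0 + c2" using cb m1 by (simp add: diff_mult_distrib)
    then show ?thesis by (metis of_nat_add of_nat_le_iff of_nat_mult)
  qed
  define Z where "Z = Z_worm N E x"
  have Zdef: "Z = real m * Zk N E x 0 + 2 * Zk N E x 2" unfolding Z_def Z_worm_def m_def by simp
  have m1r: "real m \<ge> 1" using m1 by simp
  have Zpos: "Z > 0" unfolding Zdef using Z0ge Z2ge m1r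
    by (smt (verit) mult_le_cancel_left1)
  have Zup: "Z \<le> real m * real c0 + 2 * real c2" unfolding Zdef using Z0le Z2le m1r
    by (smt (verit) mult_left_mono)
  have SE: "S \<subseteq> E" using S unfolding Omega_worm_def Omega_def by auto
  define xm where "xm = Min (x ` E)"
  have wlow: "wS x S \<ge> xm ^ n"
  proof (cases "E = {}")
    case True then show ?thesis using SE by (simp add: wS_def n_def)
  next
    case False
    have xm0: "0 \<le> xm" "xm \<le> 1" using False fE x01 unfolding xm_def
      by (auto simp: Min_le_iff Min_ge_iff)
    have "xm ^ n \<le> xm ^ card S"
      by (rule power_decreasing) (use xm0 card_mono[OF fE SE] in \<open>auto simp: n_def\<close>)
    also have "\<dots> = (\<Prod>e\<in>S. xm)" by simp
    also have "\<dots> \<le> wS x S" unfolding wS_def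
      by (rule prod_mono) (use xm0 SE fE x01 in \<open>auto simp: xm_def\<close>)
    finally show ?thesis .
  qed
  have wge: "wS x S \<ge> 0" using w01 SE by auto
  have key: "Z \<le> xi N E S * (2 * 2 ^ n) \<and> xi N E S > 0"
  proof (cases "S \<in> Omega N E 0")
    case True
    then have "xi N E S = real m" by (simp add: xi_def m_def)
    moreover have "real m * real c0 + 2 * real c2 \<le> real m * (2 * 2^n)"
    proof -
      have a: "real m * real c0 \<le> 2 * real m * real c0" using m1r by simp
      have b: "2 * real c2 \<le> 2 * real m * real c2" using mult_right_mono[OF m1r, of "real c2"] by simp
      have c: "(2 * real m) * (real c0 + real c2) \<le> (2 * real m) * 2^n"
        by (rule mult_left_mono[OF c02r]) (use m1r in simp)
      have c': "2 * real m * real c0 + 2 * real m * real c2 \<le> real m * (2 * 2^n)"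
        using c by (simp add: algebra_simps)
      show ?thesis using a b c' by linarith
    qed
    ultimately show ?thesis using Zup m1r by simp
  next
    case False
    then have "S \<in> Omega N E 2" using S unfolding Omega_worm_def by auto
    then have "xi N E S = 2" using False by (simp add: xi_def)
    moreover have "real m * real c0 + 2 * real c2 \<le> 2 * (2 * 2^n)"
      using c02r cbr by (smt (verit) of_nat_0_le_iff)
    ultimately show ?thesis using Zup by simp
  qed
  have "1/2 * (xm / 2) ^ n = xm ^ n / (2 * 2 ^ n)" by (simp add: power_divide)
  also have "\<dots> \<le> wS x S / (2 * 2 ^ n)" by (rule divide_right_mono) (use wlow in auto)
  also have "\<dots> = (xi N E S * wS x S) / (xi N E S * (2 * 2 ^ n))" using key by simp
  also have "\<dots> \<le> (xi N E S * wS x S) / Z"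
    by (rule divide_left_mono) (use key Zpos wge in auto)
  also have "\<dots> = pi_worm N E x S" unfolding pi_worm_def Z_def by simp
  finally show ?thesis unfolding xm_def n_def .
qed

definition Rc :: "'v set \<Rightarrow> ('v \<Rightarrow> nat \<Rightarrow> 'v) \<Rightarrow> (('v \<times> nat) \<times> ('v \<times> nat)) set" where
  "Rc V nbr = circ_rel V nbr \<union> (circ_rel V nbr)\<inverse>"

definition cls :: "'v set \<Rightarrow> ('v \<Rightarrow> nat \<Rightarrow> 'v) \<Rightarrow> 'v \<times> nat \<Rightarrow> ('v \<times> nat) set" where
  "cls V nbr k = (Rc V nbr)\<^sup>* `` {k}"

lemma back_slot_prop:
  assumes g: "labelled_4reg_graph V nbr" and v: "v \<in> V" and i: "i < 4"
  shows "back_slot nbr v i < 4 \<and> nbr (nbr v i) (back_slot nbr v i) = v"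
proof -
  have wV: "nbr v i \<in> V" using g v i unfolding labelled_4reg_graph_def by blast
  obtain j where j: "j < 4" "nbr (nbr v i) j = v" using g v i unfolding labelled_4reg_graph_def by blast
  have inj: "inj_on (nbr (nbr v i)) {..<4}" using g wV unfolding labelled_4reg_graph_def by blast
  have uq: "j' = j" if a: "j' < 4 \<and> nbr (nbr v i) j' = v" for j'
  proof -
    have "nbr (nbr v i) j' = nbr (nbr v i) j" using j a by simp
    moreover have "j' \<in> {..<4}" "j \<in> {..<4}" using a j by auto
    ultimately show ?thesis using inj_onD[OF inj] by blast
  qed
  have "back_slot nbr v i = j" unfolding back_slot_def
  proof (rule the_equality)
    show "j < 4 \<and> nbr (nbr v i) j = v" using j by blast
  next
    fix j' assume "j' < 4 \<and> nbr (nbr v i) j' = v"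
    then show "j' = j" by (rule uq)
  qed
  then show ?thesis using j by simp
qed

lemma opp_in:
  assumes g: "labelled_4reg_graph V nbr" and k: "k \<in> half_edges V"
  shows "opp nbr k \<in> half_edges V"
proof -
  obtain v i where k': "k = (v,i)" "v \<in> V" "i < 4" using k unfolding half_edges_def by auto
  have "nbr v i \<in> V" using g k' unfolding labelled_4reg_graph_def by blast
  then show ?thesis using back_slot_prop[OF g k'(2,3)] k' unfolding opp_def half_edges_def by auto
qed

lemma partner_in: "k \<in> half_edges V \<Longrightarrow> partner k \<in> half_edges V"
  unfolding partner_def half_edges_def by auto

lemma Rc_sub:
  assumes g: "labelled_4reg_graph V nbr"
  shows "Rc V nbr \<subseteq> half_edges V \<times> half_edges V"
  unfolding Rc_def circ_rel_def using opp_in[OF g] partner_in by blast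

lemma cls_sub:
  assumes g: "labelled_4reg_graph V nbr" and k: "k \<in> half_edges V"
  shows "cls V nbr k \<subseteq> half_edges V"
proof -
  have "Rc V nbr `` half_edges V \<subseteq> half_edges V" using Rc_sub[OF g] by blast
  then have "(Rc V nbr)\<^sup>* `` half_edges V = half_edges V" by (rule Image_closed_trancl)
  then show ?thesis unfolding cls_def using k by blast
qed

lemma circuits_eq: "circuits V nbr = cls V nbr ` half_edges V"
  unfolding circuits_def quotient_def cls_def Rc_def by auto

lemma circuit_sub:
  assumes g: "labelled_4reg_graph V nbr" and C: "C \<in> circuits V nbr"
  shows "C \<subseteq> half_edges V"
  using C cls_sub[OF g] unfolding circuits_eq by auto

lemma sym_Rc: "sym (Rc V nbr)" unfolding Rc_def sym_def by auto

lemma cls_eq: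
  assumes "(k, k') \<in> (Rc V nbr)\<^sup>*"
  shows "cls V nbr k = cls V nbr k'"
proof -
  have s: "sym ((Rc V nbr)\<^sup>*)" using sym_Rc sym_rtrancl by blast
  have "(k', k) \<in> (Rc V nbr)\<^sup>*" using s assms unfolding sym_def by blast
  then show ?thesis using assms unfolding cls_def by (auto intro: rtrancl_trans)
qed

lemma cls_self: "k \<in> cls V nbr k" unfolding cls_def by auto

lemma cls_partner:
  assumes "k \<in> half_edges V"
  shows "cls V nbr k = cls V nbr (partner k)"
proof -
  have "(k, partner k) \<in> Rc V nbr" using assms unfolding Rc_def circ_rel_def by blast
  then show ?thesis by (intro cls_eq) auto
qed

lemma cls_opp:
  assumes "k \<in> half_edges V"
  shows "cls V nbr k = cls V nbr (opp nbr k)"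
proof -
  have "(k, opp nbr k) \<in> Rc V nbr" using assms unfolding Rc_def circ_rel_def by blast
  then show ?thesis by (intro cls_eq) auto
qed

definition Adj :: "'v set \<Rightarrow> ('v \<Rightarrow> nat \<Rightarrow> 'v) \<Rightarrow> (('v \<times> nat) set \<times> ('v \<times> nat) set) set" where
  "Adj V nbr = {(a,b). {a,b} \<in> circuit_edges V nbr}"

lemma sym_Adj_rt: "sym ((Adj V nbr)\<^sup>*)"
proof -
  have "sym (Adj V nbr)" unfolding Adj_def sym_def by (auto simp: insert_commute)
  then show ?thesis by (rule sym_rtrancl)
qed

lemma cls_in: "k \<in> half_edges V \<Longrightarrow> cls V nbr k \<in> circuits V nbr"
  unfolding circuits_eq by blast

lemma vertex_conn:
  assumes v: "v \<in> V" and i: "i < 4"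
  shows "(cls V nbr (v,0), cls V nbr (v,i)) \<in> (Adj V nbr)\<^sup>*"
proof -
  have hv: "\<And>j. j < 4 \<Longrightarrow> (v,j) \<in> half_edges V" using v unfolding half_edges_def by auto
  have c03: "cls V nbr (v,0) = cls V nbr (v,3)"
    using cls_partner[OF hv[of 0]] by (simp add: partner_def)
  have c12: "cls V nbr (v,1) = cls V nbr (v,2)"
    using cls_partner[OF hv[of 1]] by (simp add: partner_def)
  have st: "(cls V nbr (v,0), cls V nbr (v,1)) \<in> (Adj V nbr)\<^sup>*"
  proof (cases "cls V nbr (v,0) = cls V nbr (v,1)")
    case True then show ?thesis by simp
  next
    case False
    have "crossing v (cls V nbr (v,0)) (cls V nbr (v,1))"
      unfolding crossing_def using cls_self[of "(v,0)" V nbr] cls_self[of "(v,3)" V nbr]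
        cls_self[of "(v,1)" V nbr] cls_self[of "(v,2)" V nbr] c03 c12 by simp
    note cr = this
    have "(v,0) \<in> half_edges V" "(v,1) \<in> half_edges V" using hv by auto
    then have cc: "cls V nbr (v,0) \<in> circuits V nbr" "cls V nbr (v,1) \<in> circuits V nbr" using cls_in by auto
    have "{cls V nbr (v,0), cls V nbr (v,1)} \<in> circuit_edges V nbr"
      unfolding circuit_edges_def mem_Collect_eq
      apply (rule exI[of _ "cls V nbr (v,0)"], rule exI[of _ "cls V nbr (v,1)"])
      using cc False v cr by blast
    then show ?thesis unfolding Adj_def by blast
  qed
  have "i = 0 \<or> i = 1 \<or> i = 2 \<or> i = 3" using i by arith
  then show ?thesis
  proof (elim disjE)
    assume "i = 0" then show ?thesis by simp
  next
    assume "i = 1" then show ?thesis using st by simp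
  next
    assume "i = 2" then show ?thesis using st c12 by simp
  next
    assume "i = 3" then show ?thesis using c03 by simp
  qed
qed

lemma adj_conn:
  assumes g: "labelled_4reg_graph V nbr" and uw: "(u,w) \<in> adj_rel V nbr"
  shows "(cls V nbr (u,0), cls V nbr (w,0)) \<in> (Adj V nbr)\<^sup>*"
proof -
  obtain i where ui: "u \<in> V" "i < 4" "nbr u i = w" using uw unfolding adj_rel_def by blast
  have wV: "w \<in> V" using g ui unfolding labelled_4reg_graph_def by blast
  define j where "j = back_slot nbr u i"
  have j: "j < 4" using back_slot_prop[OF g ui(1,2)] j_def by simp
  have "opp nbr (u,i) = (w,j)" unfolding opp_def j_def using ui by simp
  moreover have "(u,i) \<in> half_edges V" using ui unfolding half_edges_def by auto
  ultimately have cuw: "cls V nbr (u,i) = cls V nbr (w,j)" using cls_opp by metis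
  have a: "(cls V nbr (u,0), cls V nbr (u,i)) \<in> (Adj V nbr)\<^sup>*" by (rule vertex_conn[OF ui(1,2)])
  have "(cls V nbr (w,0), cls V nbr (w,j)) \<in> (Adj V nbr)\<^sup>*" by (rule vertex_conn[OF wV j])
  then have b: "(cls V nbr (w,j), cls V nbr (w,0)) \<in> (Adj V nbr)\<^sup>*"
    using sym_Adj_rt unfolding sym_def by blast
  show ?thesis using a b cuw by (metis rtrancl_trans)
qed

lemma circ_conn:
  assumes g: "labelled_4reg_graph V nbr" and v0: "v0 \<in> V" and C: "C \<in> circuits V nbr"
  shows "(cls V nbr (v0,0), C) \<in> (Adj V nbr)\<^sup>*"
proof -
  have allu: "(cls V nbr (v0,0), cls V nbr (u,0)) \<in> (Adj V nbr)\<^sup>*" if "(v0,u) \<in> (adj_rel V nbr)\<^sup>*" for u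
    using that
  proof (induction rule: rtrancl_induct)
    case base then show ?case by simp
  next
    case (step y z)
    show ?case using rtrancl_trans[OF step.IH adj_conn[OF g step.hyps(2)]] .
  qed
  obtain k where k: "k \<in> half_edges V" "C = cls V nbr k" using C unfolding circuits_eq by blast
  obtain u i where ui0: "k = (u,i)" by force
  have ui: "C = cls V nbr (u,i)" "u \<in> V" "i < 4" using k ui0 unfolding half_edges_def by auto
  have gc: "\<forall>u\<in>V. \<forall>w\<in>V. (u, w) \<in> (adj_rel V nbr)\<^sup>*" using g unfolding labelled_4reg_graph_def by simp
  have "(v0,u) \<in> (adj_rel V nbr)\<^sup>*" using gc v0 ui(2) by blast
  then have a: "(cls V nbr (v0,0), cls V nbr (u,0)) \<in> (Adj V nbr)\<^sup>*" by (rule allu)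
  show ?thesis using rtrancl_trans[OF a vertex_conn[OF ui(2,3)]] ui(1) by simp
qed

lemma fstar_nz: "fstar \<beta> a b c d \<noteq> 0 \<Longrightarrow> a \<noteq> d \<and> b \<noteq> c"
  unfolding fstar_def by (cases a; cases b; cases c; cases d) auto

lemma valid_partner:
  assumes val: "valid_orient V nbr \<beta> \<sigma>" and k: "k \<in> half_edges V"
  shows "\<sigma> (partner k) \<noteq> \<sigma> k"
proof -
  obtain v i where vi: "k = (v,i)" "v \<in> V" "i < 4" using k unfolding half_edges_def by auto
  have "vweight \<beta> \<sigma> v \<noteq> 0" using val vi unfolding valid_orient_def by blast
  then have d: "\<sigma> (v,0) \<noteq> \<sigma> (v,3)" "\<sigma> (v,1) \<noteq> \<sigma> (v,2)" using fstar_nz unfolding vweight_def by blast+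
  have "i = 0 \<or> i = 1 \<or> i = 2 \<or> i = 3" using vi by arith
  then show ?thesis using d vi(1) unfolding partner_def by auto
qed

lemma valid_opp:
  assumes val: "valid_orient V nbr \<beta> \<sigma>" and k: "k \<in> half_edges V"
  shows "\<sigma> (opp nbr k) \<noteq> \<sigma> k"
  using val k unfolding valid_orient_def by blast

lemma flip_val:
  assumes g: "labelled_4reg_graph V nbr"
    and ref: "\<forall>C\<in>circuits V nbr. h C \<in> C"
    and flip: "\<forall>C\<in>circuits V nbr. (\<not> X C \<longrightarrow> h' C = h C) \<and>
                 (X C \<longrightarrow> h' C = opp nbr (h C) \<or> h' C = partner (h C))"
    and C: "C \<in> circuits V nbr" and val: "valid_orient V nbr \<beta> \<sigma>"
  shows "\<sigma> (h' C) = (\<sigma> (h C) \<noteq> X C)"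
proof -
  have k: "h C \<in> half_edges V" using ref C circuit_sub[OF g C] by blast
  show ?thesis
  proof (cases "X C")
    case True
    then have "h' C = opp nbr (h C) \<or> h' C = partner (h C)" using flip C by blast
    then have "\<sigma> (h' C) \<noteq> \<sigma> (h C)" using valid_opp[OF val k] valid_partner[OF val k] by auto
    then show ?thesis using True by auto
  next
    case False
    then show ?thesis using flip C by auto
  qed
qed

definition Pset where
  "Pset V nbr \<beta> e hh (rel :: bool \<Rightarrow> bool \<Rightarrow> bool) = {v \<in> V. \<exists>C1\<in>e. \<exists>C2\<in>e. C1 \<noteq> C2 \<and> crossing v C1 C2 \<and>
      (\<forall>\<sigma>. valid_orient V nbr \<beta> \<sigma> \<longrightarrow> (vweight \<beta> \<sigma> v = \<beta> \<longleftrightarrow> rel (\<sigma> (hh C1)) (\<sigma> (hh C2))))}"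

lemma Pset_cong:
  assumes "\<And>C1 C2 \<sigma>. C1 \<in> e \<Longrightarrow> C2 \<in> e \<Longrightarrow> C1 \<noteq> C2 \<Longrightarrow> valid_orient V nbr \<beta> \<sigma> \<Longrightarrow>
     rel1 (\<sigma> (h1 C1)) (\<sigma> (h1 C2)) = rel2 (\<sigma> (h2 C1)) (\<sigma> (h2 C2))"
  shows "Pset V nbr \<beta> e h1 rel1 = Pset V nbr \<beta> e h2 rel2"
  unfolding Pset_def
  apply (rule Collect_cong)
  apply (rule conj_cong[OF refl])
  apply (rule bex_cong[OF refl])
  apply (rule bex_cong[OF refl])
  apply (rule conj_cong[OF refl])
  apply (rule conj_cong[OF refl])
  using assms by simp

lemma edge_AD:
  assumes g: "labelled_4reg_graph V nbr"
    and ref: "\<forall>C\<in>circuits V nbr. h C \<in> C"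
    and gf2: "\<forall>e\<in>circuit_edges V nbr. \<forall>C\<in>e. \<forall>C'\<in>e. C \<noteq> C' \<longrightarrow>
                 (X C \<noteq> X C' \<longleftrightarrow> agree_cnt V nbr \<beta> h e < disagree_cnt V nbr \<beta> h e)"
    and flip: "\<forall>C\<in>circuits V nbr. (\<not> X C \<longrightarrow> h' C = h C) \<and>
                 (X C \<longrightarrow> h' C = opp nbr (h C) \<or> h' C = partner (h C))"
    and e: "e \<in> circuit_edges V nbr"
  shows "disagree_cnt V nbr \<beta> h' e \<le> agree_cnt V nbr \<beta> h' e"
proof -
  obtain C C' where CC: "e = {C,C'}" "C \<in> circuits V nbr" "C' \<in> circuits V nbr" "C \<noteq> C'"
    using e unfolding circuit_edges_def by blast
  have ein: "\<forall>C1\<in>e. C1 \<in> circuits V nbr" using CC by auto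
  have key: "(X C1 = X C2) = (X C = X C')" if "C1 \<in> e" "C2 \<in> e" "C1 \<noteq> C2" for C1 C2
    using that CC by auto
  have eqv: "(\<sigma> (h' C1) = \<sigma> (h' C2)) = ((\<sigma> (h C1) = \<sigma> (h C2)) = (X C = X C'))"
    if "C1 \<in> e" "C2 \<in> e" "C1 \<noteq> C2" "valid_orient V nbr \<beta> \<sigma>" for C1 C2 \<sigma>
    using flip_val[OF g ref flip _ that(4)] ein that key[OF that(1-3)] by auto
  define P where "P = Pset V nbr \<beta> e"
  have A: "agree_cnt V nbr \<beta> hh e = card (P hh (=))" for hh unfolding agree_cnt_def P_def Pset_def by simp
  have D: "disagree_cnt V nbr \<beta> hh e = card (P hh (\<noteq>))" for hh unfolding disagree_cnt_def P_def Pset_def by simp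
  have gfe: "(X C \<noteq> X C') = (agree_cnt V nbr \<beta> h e < disagree_cnt V nbr \<beta> h e)"
    using gf2 e CC by auto
  show ?thesis
  proof (cases "X C = X C'")
    case True
    have "P h' (=) = P h (=)" "P h' (\<noteq>) = P h (\<noteq>)"
      unfolding P_def by (rule Pset_cong, simp add: eqv True)+
    then show ?thesis using gfe True A D by simp
  next
    case False
    have "P h' (=) = P h (\<noteq>)" "P h' (\<noteq>) = P h (=)"
      unfolding P_def by (rule Pset_cong, simp add: eqv False)+
    then show ?thesis using gfe False A D by simp
  qed
qed

theorem lemma5:
  fixes V :: "'v set" and nbr :: "'v \<Rightarrow> nat \<Rightarrow> 'v" and \<beta> :: real
    and h h' :: "('v \<times> nat) set \<Rightarrow> 'v \<times> nat" and X :: "('v \<times> nat) set \<Rightarrow> bool"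
    and S :: "('v \<times> nat) set set set"
  assumes beta: "\<beta> > 1"
    and graph: "labelled_4reg_graph V nbr"
    and ref: "\<forall>C\<in>circuits V nbr. h C \<in> C"
    and gf2: "\<forall>e\<in>circuit_edges V nbr. \<forall>C\<in>e. \<forall>C'\<in>e. C \<noteq> C' \<longrightarrow>
                 (X C \<noteq> X C' \<longleftrightarrow> agree_cnt V nbr \<beta> h e < disagree_cnt V nbr \<beta> h e)"
    and flip: "\<forall>C\<in>circuits V nbr. (\<not> X C \<longrightarrow> h' C = h C) \<and>
                 (X C \<longrightarrow> h' C = opp nbr (h C) \<or> h' C = partner (h C))"
    and S: "S \<in> Omega_worm (circuits V nbr) (circuit_edges V nbr)"
  shows "pi_worm (circuits V nbr) (circuit_edges V nbr) (edge_x V nbr \<beta> h') S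
           \<ge> 1/2 * (Min (edge_x V nbr \<beta> h' ` circuit_edges V nbr) / 2) ^ card (circuit_edges V nbr)"
proof -
  obtain v0 where v0: "v0 \<in> V" using graph unfolding labelled_4reg_graph_def by blast
  have fV: "finite V" using graph unfolding labelled_4reg_graph_def by simp
  have fN: "finite (circuits V nbr)" unfolding circuits_eq half_edges_def using fV by simp
  have tw: "twoset (circuits V nbr) (circuit_edges V nbr)"
    unfolding twoset_def
  proof
    fix e assume "e \<in> circuit_edges V nbr"
    then obtain C C' where "e = {C,C'}" "C \<in> circuits V nbr" "C' \<in> circuits V nbr" "C \<noteq> C'"
      unfolding circuit_edges_def by blast
    then show "\<exists>a b. e = {a, b} \<and> a \<in> circuits V nbr \<and> b \<in> circuits V nbr \<and> a \<noteq> b" by blast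
  qed
  have rN: "cls V nbr (v0,0) \<in> circuits V nbr" by (rule cls_in) (use v0 in \<open>simp add: half_edges_def\<close>)
  have conn: "\<forall>c\<in>circuits V nbr. (cls V nbr (v0,0), c) \<in> {(a,b). {a,b} \<in> circuit_edges V nbr}\<^sup>*"
    using circ_conn[OF graph v0] unfolding Adj_def by blast
  have x01: "\<forall>e\<in>circuit_edges V nbr. 0 \<le> edge_x V nbr \<beta> h' e \<and> edge_x V nbr \<beta> h' e \<le> 1"
  proof
    fix e assume e: "e \<in> circuit_edges V nbr"
    have AD: "disagree_cnt V nbr \<beta> h' e \<le> agree_cnt V nbr \<beta> h' e"
      by (rule edge_AD[OF graph ref gf2 flip e])
    define b where "b = \<beta> powr (real (agree_cnt V nbr \<beta> h' e) - real (disagree_cnt V nbr \<beta> h' e))"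
    have b1: "b \<ge> 1" unfolding b_def by (rule ge_one_powr_ge_zero) (use beta AD in auto)
    have ex: "edge_x V nbr \<beta> h' e = (b - 1) / (b + 1)" unfolding edge_x_def b_def Let_def by simp
    show "0 \<le> edge_x V nbr \<beta> h' e \<and> edge_x V nbr \<beta> h' e \<le> 1"
      unfolding ex using b1 by auto
  qed
  show ?thesis by (rule worm_bound[OF fN tw rN conn x01 S])
qed

end
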